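(* For each $t\ge0$ there exists $\pi^*\in\mathcal{FG}$ such that $V_{\pi^*}(t)=\sup_{\pi\in\mathcal{FG}}V_\pi(t)$.
   Context: $n\ge2$; $\Delta_n$, $\overline{\Delta}_n$ open and closed unit simplices. The market is a sequence $\{\mu(t)\}_{t\ge0}\subset\Delta_n$ with $\frac1M\le\mu_i(t+1)/\mu_i(t)\le M$ for a constant $M>0$. Relative value: $V_\pi(0)=1$, $V_\pi(t+1)=V_\pi(t)\sum_i\pi_i(\mu(t))\mu_i(t+1)/\mu_i(t)$. $\mathcal{FG}$ is the set of maps $\pi:\Delta_n\to\overline{\Delta}_n$ for which there is a concave $\Phi:\Delta_n\to(0,\infty)$ with $\sum_i\pi_i(p)\frac{q_i}{p_i}\ge\frac{\Phi(q)}{\Phi(p)}$ for all $p,q\in\Delta_n$. *)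

theory Defs
  imports "HOL-Analysis.Analysis"
begin

text \<open>Vectors in R^n are functions nat => real, with coordinates i < n relevant;
  points of the simplices are required to vanish outside {..<n}.\<close>

definition open_simplex :: "nat \<Rightarrow> (nat \<Rightarrow> real) set" where
  "open_simplex n = {p. (\<forall>i<n. 0 < p i) \<and> (\<forall>i\<ge>n. p i = 0) \<and> (\<Sum>i<n. p i) = 1}"

definition closed_simplex :: "nat \<Rightarrow> (nat \<Rightarrow> real) set" where
  "closed_simplex n = {p. (\<forall>i<n. 0 \<le> p i) \<and> (\<forall>i\<ge>n. p i = 0) \<and> (\<Sum>i<n. p i) = 1}"

definition market :: "nat \<Rightarrow> real \<Rightarrow> (nat \<Rightarrow> nat \<Rightarrow> real) \<Rightarrow> bool" where
  "market n M mu \<longleftrightarrow> 0 < M \<and> (\<forall>t. mu t \<in> open_simplex n) \<and>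
     (\<forall>t. \<forall>i<n. 1 / M \<le> mu (Suc t) i / mu t i \<and> mu (Suc t) i / mu t i \<le> M)"

fun rel_value :: "nat \<Rightarrow> (nat \<Rightarrow> nat \<Rightarrow> real) \<Rightarrow> ((nat \<Rightarrow> real) \<Rightarrow> (nat \<Rightarrow> real))
                   \<Rightarrow> nat \<Rightarrow> real" where
  "rel_value n mu w 0 = 1"
| "rel_value n mu w (Suc t) =
     rel_value n mu w t * (\<Sum>i<n. w (mu t) i * mu (Suc t) i / mu t i)"

text \<open>Concavity on the open simplex, written out (functions nat => real carry no
  real_vector instance, so convex_on is unavailable).\<close>
definition concave_on_simplex :: "nat \<Rightarrow> ((nat \<Rightarrow> real) \<Rightarrow> real) \<Rightarrow> bool" where
  "concave_on_simplex n Phi \<longleftrightarrow>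
     (\<forall>p\<in>open_simplex n. \<forall>q\<in>open_simplex n. \<forall>a::real. 0 \<le> a \<and> a \<le> 1 \<longrightarrow>
        a * Phi p + (1 - a) * Phi q \<le> Phi (\<lambda>i. a * p i + (1 - a) * q i))"

definition FG :: "nat \<Rightarrow> ((nat \<Rightarrow> real) \<Rightarrow> (nat \<Rightarrow> real)) set" where
  "FG n = {w. (\<forall>p\<in>open_simplex n. w p \<in> closed_simplex n) \<and>
     (\<exists>Phi :: (nat \<Rightarrow> real) \<Rightarrow> real.
        concave_on_simplex n Phi \<and>
        (\<forall>p\<in>open_simplex n. 0 < Phi p) \<and>
        (\<forall>p\<in>open_simplex n. \<forall>q\<in>open_simplex n.
            (\<Sum>i<n. w p i * q i / p i) \<ge> Phi q / Phi p))}"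

end

theory Submission imports Defs begin

lemma compact_box1:
  "compact (PiE UNIV (\<lambda>i::nat. {lo i..hi i::real}))"
proof -
  have "compactin (product_topology (\<lambda>i. euclidean) UNIV) (PiE UNIV (\<lambda>i::nat. {lo i..hi i::real}))"
    by (simp add: compactin_PiE)
  then show ?thesis by (simp add: euclidean_product_topology)
qed
lemma compact_box2:
  "compact {X::nat\<Rightarrow>nat\<Rightarrow>real. \<forall>s i. lo s i \<le> X s i \<and> X s i \<le> hi s i}"
proof -
  have "compactin (product_topology (\<lambda>i. euclidean) UNIV) (PiE UNIV (\<lambda>s::nat. PiE UNIV (\<lambda>i::nat. {lo s i..hi s i::real})))"
    by (simp add: compactin_PiE compact_box1)
  then have "compact (PiE UNIV (\<lambda>s::nat. PiE UNIV (\<lambda>i::nat. {lo s i..hi s i::real})))"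
    by (simp add: euclidean_product_topology)
  moreover have "PiE UNIV (\<lambda>s::nat. PiE UNIV (\<lambda>i::nat. {lo s i..hi s i::real})) = {X::nat\<Rightarrow>nat\<Rightarrow>real. \<forall>s i. lo s i \<le> X s i \<and> X s i \<le> hi s i}"
    by (auto simp: PiE_iff)
  ultimately show ?thesis by simp
qed
lemma cont_coord[continuous_intros]: "continuous_on A (\<lambda>X::nat\<Rightarrow>nat\<Rightarrow>real. X s i)"
proof -
  have "continuous_on UNIV (\<lambda>X::nat\<Rightarrow>nat\<Rightarrow>real. X s)" by simp
  then have "continuous_on UNIV (\<lambda>X::nat\<Rightarrow>nat\<Rightarrow>real. X s i)"
    by (rule continuous_on_product_then_coordinatewise)
  then show ?thesis by (rule continuous_on_subset) auto
qed

lemma rv_prod: "rel_value n mu w t = (\<Prod>s<t. \<Sum>i<n. w (mu s) i * mu (Suc s) i / mu s i)"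
  by (induction t) (simp_all add: mult.commute)

lemma construct:
  fixes n t :: nat and mu W :: "nat \<Rightarrow> nat \<Rightarrow> real" and phi :: "nat \<Rightarrow> real"
  assumes t0: "t > 0" and mu_in: "\<And>s. mu s \<in> open_simplex n"
    and W_in: "\<And>k. k<t \<Longrightarrow> W k \<in> closed_simplex n"
    and phi_pos: "\<And>k. k<t \<Longrightarrow> phi k > 0"
    and cons: "\<And>k l. k<t \<Longrightarrow> l<t \<Longrightarrow> phi l \<le> phi k * (\<Sum>i<n. W k i * mu l i / mu k i)"
    and same: "\<And>k l. k<t \<Longrightarrow> l<t \<Longrightarrow> mu k = mu l \<Longrightarrow> W k = W l"
  shows "\<exists>w\<in>FG n. \<forall>s<t. w (mu s) = W s"
proof -
  define L where "L k q = (\<Sum>i<n. W k i * q i / mu k i)" for k q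
  define Phi where "Phi q = Min ((\<lambda>k. phi k * L k q) ` {..<t})" for q
  have fin: "finite ((\<lambda>k. phi k * L k q) ` {..<t})" for q by simp
  have ne: "((\<lambda>k. phi k * L k q) ` {..<t}) \<noteq> {}" for q using t0 by auto
  have Lpos: "L k q > 0" if "k<t" "q \<in> open_simplex n" for k q
  proof -
    have Wk: "W k \<in> closed_simplex n" using W_in that(1) .
    have "\<exists>i<n. W k i > 0"
    proof (rule ccontr)
      assume "\<not> ?thesis"
      then have "\<forall>i<n. W k i = 0" using Wk by (force simp: closed_simplex_def)
      then have "(\<Sum>i<n. W k i) = 0" by simp
      with Wk show False by (simp add: closed_simplex_def)
    qed
    then obtain j where j: "j<n" "W k j > 0" by blast
    show ?thesis unfolding L_def
    proof (rule sum_pos2[of _ j])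
      show "0 < W k j * q j / mu k j" using j that mu_in[of k]
        by (simp add: open_simplex_def)
      show "\<And>i. i \<in> {..<n} \<Longrightarrow> 0 \<le> W k i * q i / mu k i"
        using Wk that mu_in[of k] by (simp add: open_simplex_def closed_simplex_def less_imp_le)
    qed (use j in auto)
  qed
  have Phi_le: "Phi q \<le> phi k * L k q" if "k<t" for k q
    unfolding Phi_def using that fin by (intro Min_le) auto
  have Phi_in: "\<exists>k<t. Phi q = phi k * L k q" for q
    using Min_in[OF fin ne, of q] unfolding Phi_def by auto
  have Phi_pos: "Phi q > 0" if "q \<in> open_simplex n" for q
    using Phi_in[of q] Lpos that phi_pos by fastforce
  have Phi_ge: "phi l \<le> Phi (mu l)" if "l<t" for l
    unfolding Phi_def using fin ne cons that by (auto simp: L_def Min_ge_iff)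
  have L_lin: "L k (\<lambda>i. a * p i + (1 - a) * q i) = a * L k p + (1 - a) * L k q" for k a p q
  proof -
    have "L k (\<lambda>i. a * p i + (1 - a) * q i) = (\<Sum>i<n. a * (W k i * p i / mu k i) + (1 - a) * (W k i * q i / mu k i))"
      unfolding L_def by (intro sum.cong) (auto simp: algebra_simps add_divide_distrib diff_divide_distrib)
    also have "\<dots> = a * L k p + (1 - a) * L k q"
      unfolding L_def by (simp add: sum.distrib sum_distrib_left)
    finally show ?thesis .
  qed
  have conc: "concave_on_simplex n Phi"
    unfolding concave_on_simplex_def
  proof (intro ballI allI impI)
    fix p q and a :: real assume a: "0 \<le> a \<and> a \<le> 1"
    show "a * Phi p + (1 - a) * Phi q \<le> Phi (\<lambda>i. a * p i + (1 - a) * q i)"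
      unfolding Phi_def[of "(\<lambda>i. a * p i + (1 - a) * q i)"]
    proof (rule Min.boundedI[OF fin ne], clarify)
      fix k assume k: "k < t"
      have "a * Phi p \<le> a * (phi k * L k p)" using a Phi_le[OF k] by (intro mult_left_mono) auto
      moreover have "(1 - a) * Phi q \<le> (1 - a) * (phi k * L k q)" using a Phi_le[OF k] by (intro mult_left_mono) auto
      moreover have "phi k * L k (\<lambda>i. a * p i + (1 - a) * q i) = a * (phi k * L k p) + (1 - a) * (phi k * L k q)"
        unfolding L_lin by (simp only: distrib_left mult.left_commute)
      ultimately show "a * Phi p + (1 - a) * Phi q \<le> phi k * L k (\<lambda>i. a * p i + (1 - a) * q i)"
        by linarith
    qed
  qed
  define w where "w p = (if \<exists>k<t. p = mu k then W (SOME k. k<t \<and> p = mu k)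
      else (\<lambda>i. if i<n then phi (SOME k. k<t \<and> Phi p = phi k * L k p) * W (SOME k. k<t \<and> Phi p = phi k * L k p) i * p i
             / mu (SOME k. k<t \<and> Phi p = phi k * L k p) i / Phi p else 0))" for p
  have w_pt: "w (mu s) = W s" if "s<t" for s
  proof -
    have ex: "\<exists>k. k<t \<and> mu s = mu k" using that by blast
    have c: "\<exists>k<t. mu s = mu k" using that by blast
    have k0: "(SOME k. k<t \<and> mu s = mu k) < t \<and> mu s = mu (SOME k. k<t \<and> mu s = mu k)"
      by (rule someI_ex[OF ex])
    have "w (mu s) = W (SOME k. k<t \<and> mu s = mu k)" unfolding w_def by (rule if_P[OF c])
    also have "\<dots> = W s" using k0 same that by metis
    finally show ?thesis .
  qed
  have wFG: "w \<in> FG n"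
    unfolding FG_def
  proof (intro CollectI conjI ballI exI[of _ Phi])
    show "concave_on_simplex n Phi" by (rule conc)
    show "0 < Phi p" if "p \<in> open_simplex n" for p using Phi_pos that .
    fix p assume p: "p \<in> open_simplex n"
    have "w p \<in> closed_simplex n \<and> (\<forall>q\<in>open_simplex n. Phi q / Phi p \<le> (\<Sum>i<n. w p i * q i / p i))"
    proof (cases "\<exists>k<t. p = mu k")
      case True
      define k0 where "k0 = (SOME k. k<t \<and> p = mu k)"
      have "k0 < t \<and> p = mu k0" unfolding k0_def by (rule someI_ex) (use True in blast)
      then have k0: "k0 < t" "p = mu k0" by auto
      have wp: "w p = W k0" unfolding w_def k0_def by (rule if_P[OF True])
      show ?thesis
      proof (intro conjI ballI)
        show "w p \<in> closed_simplex n" using wp W_in k0 by simp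
        fix q assume q: "q \<in> open_simplex n"
        have "Phi q / Phi p \<le> Phi q / phi k0"
          using Phi_ge[OF k0(1)] k0 phi_pos[OF k0(1)] Phi_pos[OF q]
          by (intro divide_left_mono) auto
        also have "\<dots> \<le> L k0 q" using Phi_le[OF k0(1), of q] phi_pos[OF k0(1)]
          by (simp add: divide_le_eq mult.commute)
        also have "\<dots> = (\<Sum>i<n. w p i * q i / p i)" unfolding L_def by (simp add: wp k0(2)[symmetric])
        finally show "Phi q / Phi p \<le> (\<Sum>i<n. w p i * q i / p i)" .
      qed
    next
      case False
      define k0 where "k0 = (SOME k. k<t \<and> Phi p = phi k * L k p)"
      have k0: "k0 < t" "Phi p = phi k0 * L k0 p" using someI_ex[OF Phi_in[of p]]
        unfolding k0_def by auto
      have wp: "w p = (\<lambda>i. if i<n then phi k0 * W k0 i * p i / mu k0 i / Phi p else 0)"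
        unfolding w_def k0_def by (rule if_not_P[OF False])
      have Wk: "W k0 \<in> closed_simplex n" using W_in k0 by simp
      have Pp: "Phi p > 0" using Phi_pos[OF p] .
      have key: "(\<Sum>i<n. w p i * q i / p i) = phi k0 * L k0 q / Phi p" if q: "\<forall>i<n. p i > 0" for q
      proof -
        have "(\<Sum>i<n. w p i * q i / p i) = (\<Sum>i<n. (phi k0 / Phi p) * (W k0 i * q i / mu k0 i))"
        proof (intro sum.cong refl)
          fix i assume "i \<in> {..<n}"
          then have "p i \<noteq> 0" using q by auto
          then show "w p i * q i / p i = (phi k0 / Phi p) * (W k0 i * q i / mu k0 i)"
            using \<open>i \<in> {..<n}\<close> by (simp add: wp)
        qed
        also have "\<dots> = (phi k0 / Phi p) * L k0 q" unfolding L_def by (rule sum_distrib_left[symmetric])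
        also have "\<dots> = phi k0 * L k0 q / Phi p" by simp
        finally show ?thesis .
      qed
      have ppos: "\<forall>i<n. p i > 0" using p by (simp add: open_simplex_def)
      show ?thesis
      proof (intro conjI ballI)
        have "(\<Sum>i<n. w p i) = (\<Sum>i<n. w p i * p i / p i)"
          using ppos by (intro sum.cong) auto
        also have "\<dots> = phi k0 * L k0 p / Phi p" by (rule key[OF ppos])
        also have "\<dots> = 1" using Pp by (simp add: k0(2)[symmetric])
        finally have s1: "(\<Sum>i<n. w p i) = 1" .
        have "\<forall>i<n. 0 \<le> w p i" using Wk Pp phi_pos[OF k0(1)] ppos mu_in[of k0]
          by (auto simp: wp closed_simplex_def open_simplex_def less_imp_le)
        then show "w p \<in> closed_simplex n" using s1 by (simp add: closed_simplex_def wp)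
        fix q assume q: "q \<in> open_simplex n"
        show "Phi q / Phi p \<le> (\<Sum>i<n. w p i * q i / p i)"
          using key[OF ppos] Phi_le[OF k0(1), of q] Pp by (simp add: divide_right_mono)
      qed
    qed
    then show "w p \<in> closed_simplex n" "\<And>q. q \<in> open_simplex n \<Longrightarrow> Phi q / Phi p \<le> (\<Sum>i<n. w p i * q i / p i)"
      by auto
  qed
  show ?thesis using wFG w_pt by blast
qed

lemma le_one_simplex:
  assumes "v \<in> closed_simplex n" "i < n" shows "v i \<le> 1" "0 \<le> v i"
proof -
  have nn: "\<forall>j<n. 0 \<le> v j" and s1: "(\<Sum>j<n. v j) = 1"
    using assms(1) unfolding closed_simplex_def by blast+
  have "v i \<le> (\<Sum>j<n. v j)"
    by (rule member_le_sum) (use nn assms(2) in auto)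
  then show "v i \<le> 1" using s1 by simp
  show "0 \<le> v i" using nn assms(2) by blast
qed

lemma sum_le_ratio:
  assumes "p \<in> open_simplex n" "q \<in> open_simplex n" "v \<in> closed_simplex n"
  shows "(\<Sum>i<n. v i * q i / p i) \<le> (\<Sum>i<n. q i / p i)"
proof (rule sum_mono)
  fix i assume i: "i \<in> {..<n}"
  have v1: "v i \<le> 1" using le_one_simplex[OF assms(3)] i by simp
  have pq: "0 < p i" "0 < q i" using assms(1,2) i unfolding open_simplex_def by auto
  have "0 \<le> q i / p i" using pq by simp
  then have "v i * (q i / p i) \<le> 1 * (q i / p i)" using v1 by (intro mult_right_mono)
  then show "v i * q i / p i \<le> q i / p i" by simp
qed

theorem lemma4p5:
  fixes n :: nat and M :: real and mu :: "nat \<Rightarrow> nat \<Rightarrow> real" and t :: nat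
  assumes "n \<ge> 2" and "market n M mu"
  shows "\<exists>wstar\<in>FG n. (\<forall>w\<in>FG n. rel_value n mu w t \<le> rel_value n mu wstar t) \<and>
           rel_value n mu wstar t = (SUP w\<in>FG n. rel_value n mu w t)"
proof -
  have mu_in: "\<And>s. mu s \<in> open_simplex n" using assms(2) by (simp add: market_def)
  have main: "\<exists>wstar\<in>FG n. \<forall>w\<in>FG n. rel_value n mu w t \<le> rel_value n mu wstar t"
  proof (cases "t = 0")
    case True
    have "(\<lambda>p. p) \<in> FG n"
      unfolding FG_def
    proof (intro CollectI conjI ballI exI[of _ "\<lambda>_. 1"])
      show "p \<in> closed_simplex n" if "p \<in> open_simplex n" for p :: "nat \<Rightarrow> real"
        using that by (auto simp: open_simplex_def closed_simplex_def less_imp_le)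
      show "concave_on_simplex n (\<lambda>_. 1)" by (simp add: concave_on_simplex_def)
      show "(0::real) < 1" by simp
      fix p q :: "nat \<Rightarrow> real" assume p: "p \<in> open_simplex n" and q: "q \<in> open_simplex n"
      have "(\<Sum>i<n. p i * q i / p i) = (\<Sum>i<n. q i)"
        using p by (intro sum.cong) (auto simp: open_simplex_def)
      then show "1 / 1 \<le> (\<Sum>i<n. p i * q i / p i)" using q by (simp add: open_simplex_def)
    qed
    then show ?thesis using True by auto
  next
    case False
    then have t0: "t > 0" by simp
    define R where "R s s' = (\<Sum>i<n. mu s i / mu s' i)" for s s'
    define B where "B = 1 + (\<Sum>s<t. \<Sum>s'<t. R s s')"
    have Rnn: "0 \<le> R s s'" for s s'
      unfolding R_def using mu_in by (intro sum_nonneg) (auto simp: open_simplex_def less_imp_le)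
    have RB: "R s s' \<le> B" if "s<t" "s'<t" for s s'
    proof -
      have "R s s' \<le> (\<Sum>s'<t. R s s')" using that Rnn by (intro member_le_sum) auto
      also have "\<dots> \<le> (\<Sum>s<t. \<Sum>s'<t. R s s')" using that Rnn
        by (intro member_le_sum[where f="\<lambda>s. \<Sum>s'<t. R s s'"] sum_nonneg) auto
      finally show ?thesis unfolding B_def by simp
    qed
    have B1: "1 \<le> B" unfolding B_def using Rnn by (simp add: sum_nonneg)
    define lo where "lo s i = (if s<t \<and> i<n then 0 else if s<t \<and> i=n then (if s=0 then 1 else 1/B) else 0)" for s i :: nat
    define hi where "hi s i = (if s<t \<and> i<n then 1 else if s<t \<and> i=n then (if s=0 then 1 else B) else (0::real))" for s i :: nat
    define Ks where "Ks = {X::nat\<Rightarrow>nat\<Rightarrow>real. \<forall>s i. lo s i \<le> X s i \<and> X s i \<le> hi s i}"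
    define C where "C = {X::nat\<Rightarrow>nat\<Rightarrow>real. \<forall>s. s<t \<longrightarrow> (\<forall>s'. s'<t \<longrightarrow>
        ((\<Sum>i<n. X s i) = 1 \<and> X s' n \<le> X s n * (\<Sum>i<n. X s i * mu s' i / mu s i) \<and>
         (mu s = mu s' \<longrightarrow> X s = X s')))}"
    define f where "f X = (\<Prod>s<t. \<Sum>i<n. X s i * mu (Suc s) i / mu s i)" for X :: "nat\<Rightarrow>nat\<Rightarrow>real"
    have munz: "mu s i \<noteq> 0" if "i<n" for s i using mu_in[of s] that by (auto simp: open_simplex_def)
    have cpt: "compact (Ks \<inter> C)"
    proof (rule compact_Int_closed)
      show "compact Ks" unfolding Ks_def by (rule compact_box2)
      have cs: "continuous_on UNIV (\<lambda>X::nat\<Rightarrow>nat\<Rightarrow>real. X s)" for s by simp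
      show "closed C" unfolding C_def
        by (intro closed_Collect_all closed_Collect_imp closed_Collect_conj open_Collect_const
            closed_Collect_eq closed_Collect_le cs continuous_intros) (auto simp: munz)
    qed
    define X0 where "X0 s i = (if s<t \<and> i<n then mu s i else if s<t \<and> i=n then 1 else (0::real))" for s i :: nat
    have X0: "X0 \<in> Ks \<inter> C"
    proof
      show "X0 \<in> Ks" unfolding Ks_def
      proof (intro CollectI allI)
        fix s i :: nat
        have "mu s \<in> closed_simplex n" using mu_in[of s] by (auto simp: open_simplex_def closed_simplex_def less_imp_le)
        then show "lo s i \<le> X0 s i \<and> X0 s i \<le> hi s i"
          using le_one_simplex[of "mu s" n i] B1 by (auto simp: lo_def hi_def X0_def)
      qed
      show "X0 \<in> C" unfolding C_def
      proof (intro CollectI allI impI conjI)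
        fix s s' assume s: "s<t" and s': "s'<t"
        show "(\<Sum>i<n. X0 s i) = 1" using s mu_in[of s] by (simp add: X0_def open_simplex_def)
        have "(\<Sum>i<n. X0 s i * mu s' i / mu s i) = (\<Sum>i<n. mu s' i)"
          using s mu_in[of s] by (intro sum.cong) (auto simp: X0_def open_simplex_def)
        then show "X0 s' n \<le> X0 s n * (\<Sum>i<n. X0 s i * mu s' i / mu s i)"
          using s s' mu_in[of s'] by (simp add: X0_def open_simplex_def)
        show "X0 s = X0 s'" if "mu s = mu s'" using that s s' by (intro ext) (simp add: X0_def)
      qed
    qed
    have fcont: "continuous_on (Ks \<inter> C) f" unfolding f_def by (intro continuous_intros) (auto simp: munz)
    obtain Xs where Xs: "Xs \<in> Ks \<inter> C" and Xmax: "\<And>Y. Y \<in> Ks \<inter> C \<Longrightarrow> f Y \<le> f Xs"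
      using continuous_attains_sup[OF cpt _ fcont] X0 by blast
    define W where "W s = (\<lambda>i. if i<n then Xs s i else 0)" for s
    define phi where "phi s = Xs s n" for s
    have XK: "lo s i \<le> Xs s i \<and> Xs s i \<le> hi s i" for s i using Xs by (simp add: Ks_def)
    have XsC: "Xs \<in> C" using Xs by blast
    have XCall: "\<forall>s. s<t \<longrightarrow> (\<forall>s'. s'<t \<longrightarrow>
        ((\<Sum>i<n. Xs s i) = 1 \<and> Xs s' n \<le> Xs s n * (\<Sum>i<n. Xs s i * mu s' i / mu s i) \<and>
         (mu s = mu s' \<longrightarrow> Xs s = Xs s')))" using XsC unfolding C_def by (rule CollectD)
    have XC: "(\<Sum>i<n. Xs s i) = 1 \<and> Xs s' n \<le> Xs s n * (\<Sum>i<n. Xs s i * mu s' i / mu s i) \<and>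
         (mu s = mu s' \<longrightarrow> Xs s = Xs s')" if "s<t" "s'<t" for s s'
      using XCall[rule_format, OF that] .
    have Wsum: "(\<Sum>i<n. W k i * q i / mu k i) = (\<Sum>i<n. Xs k i * q i / mu k i)" for k q
      by (intro sum.cong) (auto simp: W_def)
    have "\<exists>w\<in>FG n. \<forall>s<t. w (mu s) = W s"
    proof (rule construct[OF t0 mu_in])
      fix k assume k: "k<t"
      have "\<forall>i<n. 0 \<le> Xs k i"
      proof (intro allI impI)
        fix i assume "i<n" then show "0 \<le> Xs k i" using XK[of k i] k by (simp add: lo_def)
      qed
      moreover have "(\<Sum>i<n. W k i) = (\<Sum>i<n. Xs k i)" by (intro sum.cong) (auto simp: W_def)
      ultimately show "W k \<in> closed_simplex n" using XC[OF k k] by (auto simp: closed_simplex_def W_def)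
      have B0: "0 < 1 / B" using B1 by simp
      have "lo k n \<le> Xs k n" using XK[of k n] by simp
      moreover have "0 < lo k n" using B0 k by (simp add: lo_def)
      ultimately show "0 < phi k" unfolding phi_def by linarith
    next
      fix k l assume k: "k<t" and l: "l<t"
      show "phi l \<le> phi k * (\<Sum>i<n. W k i * mu l i / mu k i)"
        using XC[OF k l] unfolding Wsum phi_def by simp
      show "mu k = mu l \<Longrightarrow> W k = W l"
      proof -
        assume "mu k = mu l"
        then have "Xs k = Xs l" using XC[OF k l] by blast
        then show "W k = W l" unfolding W_def by (rule arg_cong)
      qed
    qed
    then obtain wstar where ws: "wstar \<in> FG n" and wsm: "\<And>s. s<t \<Longrightarrow> wstar (mu s) = W s" by blast
    have vstar: "rel_value n mu wstar t = f Xs"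
      unfolding rv_prod f_def
      by (intro prod.cong refl sum.cong) (auto simp: wsm W_def)
    show ?thesis
    proof (intro bexI[OF _ ws] ballI)
      fix w assume w: "w \<in> FG n"
      then obtain Phi where wcs: "\<And>p. p \<in> open_simplex n \<Longrightarrow> w p \<in> closed_simplex n"
        and Ppos: "\<And>p. p \<in> open_simplex n \<Longrightarrow> 0 < Phi p"
        and Pineq: "\<And>p q. p \<in> open_simplex n \<Longrightarrow> q \<in> open_simplex n \<Longrightarrow> Phi q / Phi p \<le> (\<Sum>i<n. w p i * q i / p i)"
        unfolding FG_def by blast
      define Xw where "Xw s i = (if s<t \<and> i<n then w (mu s) i else if s<t \<and> i=n then Phi (mu s) / Phi (mu 0) else 0)" for s i :: nat
      have ratio: "Phi (mu s') / Phi (mu s) \<le> B" if "s<t" "s'<t" for s s'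
      proof -
        have "Phi (mu s') / Phi (mu s) \<le> (\<Sum>i<n. w (mu s) i * mu s' i / mu s i)" by (rule Pineq[OF mu_in mu_in])
        also have "\<dots> \<le> R s' s" unfolding R_def by (rule sum_le_ratio[OF mu_in mu_in wcs[OF mu_in]])
        also have "\<dots> \<le> B" using RB that by simp
        finally show ?thesis .
      qed
      have XwK: "Xw \<in> Ks" unfolding Ks_def
      proof (intro CollectI allI)
        fix s i :: nat
        show "lo s i \<le> Xw s i \<and> Xw s i \<le> hi s i"
        proof (cases "s<t \<and> i<n")
          case True then show ?thesis using le_one_simplex[OF wcs[OF mu_in], of i s] by (simp add: lo_def hi_def Xw_def)
        next
          case F: False
          show ?thesis
          proof (cases "s<t \<and> i=n")
            case True
            have p0: "0 < Phi (mu 0)" "0 < Phi (mu s)" using Ppos mu_in by auto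
            have up: "Phi (mu s) / Phi (mu 0) \<le> B" using ratio[of 0 s] True t0 by simp
            have "Phi (mu 0) / Phi (mu s) \<le> B" using ratio[of s 0] True t0 by simp
            then have "Phi (mu 0) \<le> B * Phi (mu s)" using p0 by (simp add: divide_le_eq)
            then have low: "1 / B \<le> Phi (mu s) / Phi (mu 0)" using p0 B1
              by (simp add: divide_le_eq le_divide_eq mult.commute)
            show ?thesis using True F up low p0 by (auto simp: lo_def hi_def Xw_def)
          next
            case False then show ?thesis using F by (simp add: lo_def hi_def Xw_def)
          qed
        qed
      qed
      have XwC: "Xw \<in> C" unfolding C_def
      proof (intro CollectI allI impI conjI)
        fix s s' assume s: "s<t" and s': "s'<t"
        show "(\<Sum>i<n. Xw s i) = 1" using s wcs[OF mu_in[of s]] by (simp add: Xw_def closed_simplex_def)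
        have eq: "(\<Sum>i<n. Xw s i * mu s' i / mu s i) = (\<Sum>i<n. w (mu s) i * mu s' i / mu s i)"
          using s by (intro sum.cong) (auto simp: Xw_def)
        have p0: "0 < Phi (mu 0)" "0 < Phi (mu s)" using Ppos mu_in by auto
        have "Xw s' n = (Phi (mu s) / Phi (mu 0)) * (Phi (mu s') / Phi (mu s))"
          using s' p0 by (simp add: Xw_def)
        also have "\<dots> \<le> (Phi (mu s) / Phi (mu 0)) * (\<Sum>i<n. w (mu s) i * mu s' i / mu s i)"
          using p0 Pineq[OF mu_in mu_in, of s' s] by (intro mult_left_mono) auto
        also have "\<dots> = Xw s n * (\<Sum>i<n. Xw s i * mu s' i / mu s i)" using s by (simp add: eq Xw_def)
        finally show "Xw s' n \<le> Xw s n * (\<Sum>i<n. Xw s i * mu s' i / mu s i)" .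
        show "Xw s = Xw s'" if "mu s = mu s'" using that s s' by (intro ext) (simp add: Xw_def)
      qed
      have "rel_value n mu w t = f Xw"
        unfolding rv_prod f_def by (intro prod.cong refl sum.cong) (auto simp: Xw_def)
      also have "\<dots> \<le> f Xs" using Xmax XwK XwC by blast
      finally show "rel_value n mu w t \<le> rel_value n mu wstar t" using vstar by simp
    qed
  qed
  then obtain wstar where ws: "wstar \<in> FG n" and wm: "\<forall>w\<in>FG n. rel_value n mu w t \<le> rel_value n mu wstar t"
    by blast
  have "(SUP w\<in>FG n. rel_value n mu w t) = rel_value n mu wstar t"
    using ws wm by (intro cSup_eq_maximum) auto
  then show ?thesis using ws wm by auto
qed

end
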